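(* Suppose $1/n\ll\varepsilon\ll1$ and let $k$ be an integer with $n/4\leq k\leq 3n/4$. Let $C$ be an oriented cycle on $n$ vertices with $\sigma(C)<\varepsilon n$. Then the vertices of $C$ can be labelled $C=(u_1u_2\dots u_n)$ (a choice of cyclic order and starting vertex) such that: (i) there are long runs $P_1,P_2$ in $C$ such that $P_1$ is a forward path and $d_C(P_1,P_2)=k$; (ii) there are long runs $P_1',P_2',P_3',P_4'$ in $C$ such that $d_C(P_i',P_{i+1}')=\lfloor n/4\rfloor$ for $i=1,2,3$.
   Context: For an oriented cycle $C$, a sink vertex is a vertex of outdegree $0$ in $C$, and $\sigma(C)$ is the number of sink vertices. Given the labelling $C=(u_1\dots u_n)$ (indices mod $n$), subpaths are traversed in increasing index order, giving each an initial and a final vertex; an edge between $u_i$ and $u_{i+1}$ is forward if it is $u_iu_{i+1}$ and backward if it is $u_{i+1}u_i$; a subpath is a forward path if all its edges are forward, and consistently oriented if all its edges are forward or all are backward. A long run is a consistently oriented subpath of $C$ of length $20$ (i.e. $20$ edges). $d_C(u_i,u_j)$ is the length (number of edges) of the subpath from $u_i$ to $u_j$ in increasing index order, and for subpaths $P,P'$, $d_C(P,P')=d_C(v,v')$ where $v,v'$ are the initial vertices of $P,P'$. The hierarchy $\alpha\ll\beta$ means $\alpha$ is sufficiently small as a function of $\beta$. *)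

theory Defs
  imports Complex_Main
begin

text \<open>We index from 0 instead of 1.\<close>

definition cycle_labelling :: "'a set \<Rightarrow> ('a \<times> 'a) set \<Rightarrow> nat \<Rightarrow> (nat \<Rightarrow> 'a) \<Rightarrow> bool" where
  "cycle_labelling V E n u \<longleftrightarrow>
     bij_betw u {..<n} V \<and>
     (\<forall>i<n. ((u i, u (Suc i mod n)) \<in> E) \<noteq> ((u (Suc i mod n), u i) \<in> E)) \<and>
     E \<subseteq> {(u i, u (Suc i mod n)) | i. i < n} \<union> {(u (Suc i mod n), u i) | i. i < n}"

definition oriented_cycle :: "'a set \<Rightarrow> ('a \<times> 'a) set \<Rightarrow> nat \<Rightarrow> bool" where
  "oriented_cycle V E n \<longleftrightarrow> n \<ge> 3 \<and> (\<exists>u. cycle_labelling V E n u)"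

definition sinks :: "'a set \<Rightarrow> ('a \<times> 'a) set \<Rightarrow> nat" where
  "sinks V E = card {v \<in> V. \<not> (\<exists>w. (v, w) \<in> E)}"

definition fwd_edge :: "('a \<times> 'a) set \<Rightarrow> nat \<Rightarrow> (nat \<Rightarrow> 'a) \<Rightarrow> nat \<Rightarrow> bool" where
  "fwd_edge E n u i \<longleftrightarrow> (u (i mod n), u (Suc i mod n)) \<in> E"

definition bwd_edge :: "('a \<times> 'a) set \<Rightarrow> nat \<Rightarrow> (nat \<Rightarrow> 'a) \<Rightarrow> nat \<Rightarrow> bool" where
  "bwd_edge E n u i \<longleftrightarrow> (u (Suc i mod n), u (i mod n)) \<in> E"

definition forward_run :: "('a \<times> 'a) set \<Rightarrow> nat \<Rightarrow> (nat \<Rightarrow> 'a) \<Rightarrow> nat \<Rightarrow> bool" where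
  "forward_run E n u i \<longleftrightarrow> (\<forall>j<20. fwd_edge E n u (i + j))"

definition long_run :: "('a \<times> 'a) set \<Rightarrow> nat \<Rightarrow> (nat \<Rightarrow> 'a) \<Rightarrow> nat \<Rightarrow> bool" where
  "long_run E n u i \<longleftrightarrow> (\<forall>j<20. fwd_edge E n u (i + j)) \<or> (\<forall>j<20. bwd_edge E n u (i + j))"

definition dC :: "nat \<Rightarrow> nat \<Rightarrow> nat \<Rightarrow> nat" where
  "dC n i j = (j + n - i) mod n"

end

theory Submission
  imports Defs
begin

lemma inj_aux: "i<n \<Longrightarrow> i'<n \<Longrightarrow> (i + c) mod n = (i' + c) mod (n::nat) \<Longrightarrow> i = i'"
proof -
  have *: "i \<le> i' \<Longrightarrow> i<n \<Longrightarrow> i'<n \<Longrightarrow> (i + c) mod n = (i' + c) mod (n::nat) \<Longrightarrow> i = i'" for i i'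
  proof -
    assume a: "i \<le> i'" "i<n" "i'<n" "(i + c) mod n = (i' + c) mod (n::nat)"
    then have "n dvd (i'+c) - (i+c)" using mod_eq_dvd_iff_nat[of "i+c" "i'+c" n] by simp
    then have "n dvd i' - i" by simp
    moreover have "i' - i < n" using a by simp
    ultimately show "i = i'" using a(1) by (metis dvd_imp_le le_antisym less_le_not_le zero_less_diff)
  qed
  show "i<n \<Longrightarrow> i'<n \<Longrightarrow> (i + c) mod n = (i' + c) mod (n::nat) \<Longrightarrow> i = i'"
    using *[of i i'] *[of i' i] by linarith
qed
lemma dC_aux: "m < n \<Longrightarrow> (((x+m) mod n) + n - x mod n) mod n = (m::nat)"
proof -
  assume m: "m < n"
  define r where "r = x mod n"
  have r: "r < n" using m r_def by simp
  have e: "(x+m) mod n = (r+m) mod n" by (simp add: r_def mod_add_left_eq)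
  show ?thesis
  proof (cases "r + m < n")
    case True
    then show ?thesis using m by (simp add: e r_def[symmetric])
  next
    case False
    then have "(r+m) mod n = r + m - n" using m r by (simp add: mod_if)
    then show ?thesis using m r False by (simp add: e r_def[symmetric])
  qed
qed
lemma fwd_mod: "n>0 \<Longrightarrow> fwd_edge E n u (x mod n) = fwd_edge E n u x"
  by (simp add: fwd_edge_def mod_Suc_eq)
lemma bwd_mod: "n>0 \<Longrightarrow> bwd_edge E n u (x mod n) = bwd_edge E n u x"
  by (simp add: bwd_edge_def mod_Suc_eq)
lemma fwd_Suc_mod: "n>0 \<Longrightarrow> fwd_edge E n u (Suc (x mod n)) = fwd_edge E n u (Suc x)"
  by (metis fwd_mod mod_Suc_eq)

lemma xor: assumes "cycle_labelling V E n u" "n>0"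
  shows "bwd_edge E n u x \<longleftrightarrow> \<not> fwd_edge E n u x"
proof -
  have "x mod n < n" using assms(2) by simp
  then have "((u (x mod n), u (Suc (x mod n) mod n)) \<in> E) \<noteq> ((u (Suc (x mod n) mod n), u (x mod n)) \<in> E)"
    using assms(1) unfolding cycle_labelling_def by blast
  then show ?thesis unfolding fwd_edge_def bwd_edge_def by (simp add: mod_Suc_eq)
qed

lemma card_shift: fixes n c :: nat assumes "finite S"
  shows "card {i\<in>{..<n}. (i + c) mod n \<in> S} \<le> card S"
proof (rule card_inj_on_le[where f="\<lambda>i. (i + c) mod n"])
  show "inj_on (\<lambda>i. (i + c) mod n) {i \<in> {..<n}. (i + c) mod n \<in> S}"
  proof (rule inj_onI)
    fix x y :: nat assume "x \<in> {i \<in> {..<n}. (i + c) mod n \<in> S}" "y \<in> {i \<in> {..<n}. (i + c) mod n \<in> S}"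
      "(x + c) mod n = (y + c) mod n"
    then show "x = y" using inj_aux[of x n y c] by simp
  qed
qed (use assms in auto)

definition turnsFB where "turnsFB E n u = {t\<in>{..<n}. fwd_edge E n u t \<and> \<not> fwd_edge E n u (Suc t)}"
definition turnsBF where "turnsBF E n u = {t\<in>{..<n}. \<not> fwd_edge E n u t \<and> fwd_edge E n u (Suc t)}"
definition badset where "badset E n u = {i\<in>{..<n}. \<not> long_run E n u i}"

lemma FB_sinks: assumes cl: "cycle_labelling V E n u" and n: "n>0"
  shows "card (turnsFB E n u) \<le> sinks V E"
  unfolding sinks_def
proof (rule card_inj_on_le[where f="\<lambda>t. u (Suc t mod n)"])
  have bij: "bij_betw u {..<n} V" using cl unfolding cycle_labelling_def by blast
  then have inj: "inj_on u {..<n}" and V: "V = u ` {..<n}" by (auto simp: bij_betw_def)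
  show "finite {v \<in> V. \<not> (\<exists>w. (v, w) \<in> E)}" using V by simp
  show "inj_on (\<lambda>t. u (Suc t mod n)) (turnsFB E n u)"
  proof (rule inj_onI)
    fix t t' assume a: "t \<in> turnsFB E n u" "t' \<in> turnsFB E n u" "u (Suc t mod n) = u (Suc t' mod n)"
    then have "Suc t mod n = Suc t' mod n" using inj n by (auto dest: inj_onD)
    then show "t = t'" using a inj_aux[of t n t' 1] by (auto simp: turnsFB_def)
  qed
  have Esub: "E \<subseteq> {(u i, u (Suc i mod n)) | i. i < n} \<union> {(u (Suc i mod n), u i) | i. i < n}"
    using cl unfolding cycle_labelling_def by blast
  show "(\<lambda>t. u (Suc t mod n)) ` turnsFB E n u \<subseteq> {v \<in> V. \<not> (\<exists>w. (v, w) \<in> E)}"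
  proof safe
    fix t assume t: "t \<in> turnsFB E n u"
    then have tn: "t < n" and ft: "fwd_edge E n u t" and nf: "\<not> fwd_edge E n u (Suc t)"
      by (auto simp: turnsFB_def)
    show "u (Suc t mod n) \<in> V" using V n by simp
    fix w assume vw: "(u (Suc t mod n), w) \<in> E"
    then obtain i where i: "i < n" "(u (Suc t mod n), w) = (u i, u (Suc i mod n)) \<or> (u (Suc t mod n), w) = (u (Suc i mod n), u i)"
      using Esub by blast
    show False
      using i(2)
    proof
      assume h: "(u (Suc t mod n), w) = (u i, u (Suc i mod n))"
      then have "u (Suc t mod n) = u i" by simp
      then have "Suc t mod n = i" using inj i(1) n by (auto dest: inj_onD)
      then have "Suc i mod n = Suc (Suc t) mod n" by (metis mod_Suc_eq)
      then have "(u (Suc t mod n), u (Suc (Suc t) mod n)) \<in> E" using h vw by simp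
      then show False using nf by (simp add: fwd_edge_def)
    next
      assume h: "(u (Suc t mod n), w) = (u (Suc i mod n), u i)"
      then have "u (Suc t mod n) = u (Suc i mod n)" by simp
      then have "Suc t mod n = Suc i mod n" using inj i(1) n by (auto dest: inj_onD)
      then have "t = i" using inj_aux[of t n i 1] tn i(1) by simp
      then have "bwd_edge E n u t" using h vw tn by (simp add: bwd_edge_def)
      then show False using ft xor[OF cl n] by simp
    qed
  qed
qed

lemma count_ind: "finite A \<Longrightarrow> (\<Sum>t\<in>A. if P t then 1 else 0) = int (card {t\<in>A. P t})"
  by (simp add: sum.inter_filter[symmetric])

lemma BF_FB: assumes n: "n>0"
  shows "card (turnsBF E n u) = card (turnsFB E n u)"
proof -
  define F where "F t = (if fwd_edge E n u t then 1 else 0::int)" for t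
  have "(\<Sum>t<n. F (Suc t) - F t) = F n - F 0" by (rule sum_lessThan_telescope)
  also have "F n = F 0" using fwd_mod[of n E u n, OF n] fwd_mod[of n E u 0, OF n] by (simp add: F_def)
  finally have z: "(\<Sum>t<n. F (Suc t) - F t) = 0" by simp
  have "(\<Sum>t<n. F (Suc t) - F t) = (\<Sum>t<n. (if \<not> fwd_edge E n u t \<and> fwd_edge E n u (Suc t) then 1 else 0)
       - (if fwd_edge E n u t \<and> \<not> fwd_edge E n u (Suc t) then 1 else 0))"
    by (rule sum.cong) (auto simp: F_def)
  also have "\<dots> = int (card (turnsBF E n u)) - int (card (turnsFB E n u))"
    by (simp add: sum_subtractf count_ind turnsBF_def turnsFB_def)
  finally show ?thesis using z by simp
qed

lemma no_turn_run: assumes cl: "cycle_labelling V E n u" and n: "n>0"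
  and h: "\<forall>j<19. fwd_edge E n u (i+j) = fwd_edge E n u (Suc (i+j))"
  shows "long_run E n u i"
proof -
  have all: "fwd_edge E n u (i+j) = fwd_edge E n u i" if "j<20" for j
    using that
  proof (induction j)
    case (Suc j)
    then show ?case using h[rule_format, of j] by simp
  qed simp
  show ?thesis
  proof (cases "fwd_edge E n u i")
    case True
    then show ?thesis using all unfolding long_run_def by simp
  next
    case False
    then show ?thesis using all xor[OF cl n] unfolding long_run_def by simp
  qed
qed

lemma bad_bound: assumes cl: "cycle_labelling V E n u" and n: "n>0"
  shows "card (badset E n u) \<le> 38 * sinks V E"
proof -
  define T where "T = turnsFB E n u \<union> turnsBF E n u"
  have fT: "finite T" by (simp add: T_def turnsFB_def turnsBF_def)
  have "badset E n u \<subseteq> (\<Union>j\<in>{..<19}. {i\<in>{..<n}. (i + j) mod n \<in> T})"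
  proof
    fix i assume "i \<in> badset E n u"
    then have i: "i < n" "\<not> long_run E n u i" by (auto simp: badset_def)
    then obtain j where j: "j < 19" "fwd_edge E n u (i+j) \<noteq> fwd_edge E n u (Suc (i+j))"
      using no_turn_run[OF cl n] by blast
    have "(i+j) mod n \<in> T"
      using j(2) fwd_mod[of n E u "i+j", OF n] fwd_Suc_mod[of n E u "i+j", OF n] n
      by (auto simp: T_def turnsFB_def turnsBF_def)
    then show "i \<in> (\<Union>j\<in>{..<19}. {i\<in>{..<n}. (i + j) mod n \<in> T})" using i j by auto
  qed
  then have "card (badset E n u) \<le> card (\<Union>j\<in>{..<19}. {i\<in>{..<n}. (i + j) mod n \<in> T})"
    by (intro card_mono) auto
  also have "\<dots> \<le> (\<Sum>j<19. card {i\<in>{..<n}. (i + j) mod n \<in> T})" by (rule card_UN_le) simp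
  also have "\<dots> \<le> (\<Sum>j<(19::nat). card T)" by (intro sum_mono card_shift fT)
  also have "\<dots> = 19 * card T" by simp
  also have "card T \<le> card (turnsFB E n u) + card (turnsBF E n u)" unfolding T_def by (rule card_Un_le)
  also have "\<dots> \<le> 2 * sinks V E" using BF_FB[OF n, of E u] FB_sinks[OF cl n] by simp
  finally show ?thesis by simp
qed
lemma dC_shift: "m < n \<Longrightarrow> dC n (x mod n) ((x+m) mod n) = m"
  unfolding dC_def by (rule dC_aux)

lemma core:
  assumes cl: "cycle_labelling V E n u" and n: "n>0"
    and bad: "10 * card (badset E n u) < n"
    and half: "2 * card {t\<in>{..<n}. fwd_edge E n u t} \<ge> n"
    and k: "4 * k \<le> 3 * n"
  shows "(\<exists>i j. i < n \<and> j < n \<and> forward_run E n u i \<and> long_run E n u j \<and> dC n i j = k) \<and>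
              (\<exists>p::nat \<Rightarrow> nat. (\<forall>t\<in>{1,2,3,4}. p t < n \<and> long_run E n u (p t)) \<and>
                  (\<forall>t\<in>{1,2,3}. dC n (p t) (p (t+1)) = n div 4))"
proof
  define B where "B = badset E n u"
  have fB: "finite B" by (simp add: B_def badset_def)
  define Fw where "Fw = {i\<in>{..<n}. forward_run E n u i}"
  define Nf where "Nf = {t\<in>{..<n}. \<not> fwd_edge E n u t}"
  define Ff where "Ff = {t\<in>{..<n}. fwd_edge E n u t}"
  have NfFf: "card Nf + card Ff = n"
  proof -
    have "card Nf + card Ff = card (Nf \<union> Ff)" by (rule card_Un_disjoint[symmetric]) (auto simp: Nf_def Ff_def)
    also have "Nf \<union> Ff = {..<n}" by (auto simp: Nf_def Ff_def)
    finally show ?thesis by simp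
  qed
  have sub: "{..<n} - Fw \<subseteq> B \<union> Nf"
  proof
    fix i assume i: "i \<in> {..<n} - Fw"
    show "i \<in> B \<union> Nf"
    proof (rule ccontr)
      assume "i \<notin> B \<union> Nf"
      then have lr: "long_run E n u i" and f: "fwd_edge E n u i" using i by (auto simp: B_def badset_def Nf_def)
      have "\<not> (\<forall>j<20. bwd_edge E n u (i + j))" using f xor[OF cl n, where x=i] by (metis add_0_right zero_less_numeral)
      then have "forward_run E n u i" using lr unfolding long_run_def forward_run_def by blast
      then show False using i by (auto simp: Fw_def)
    qed
  qed
  have "card ({..<n} - Fw) \<le> card (B \<union> Nf)" by (rule card_mono[OF _ sub]) (simp add: B_def badset_def Nf_def)
  also have "\<dots> \<le> card B + card Nf" by (rule card_Un_le)
  finally have c1: "card ({..<n} - Fw) \<le> card B + card Nf" .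
  have "card ({..<n} - Fw) = n - card Fw" by (subst card_Diff_subset) (auto simp: Fw_def)
  moreover have "card Fw \<le> n" using card_mono[of "{..<n}" Fw] by (auto simp: Fw_def)
  ultimately have cFw: "card Fw > card B" using c1 NfFf half bad by (simp add: Ff_def B_def)
  define S where "S = {i\<in>{..<n}. (i + k) mod n \<in> B}"
  have "card S \<le> card B" unfolding S_def by (rule card_shift[OF fB])
  then have "\<not> Fw \<subseteq> S" using cFw card_mono[of S Fw] by (auto simp: S_def)
  then obtain i where i: "i \<in> Fw" "i \<notin> S" by blast
  have kn: "k < n" using k n by simp
  show "\<exists>i j. i < n \<and> j < n \<and> forward_run E n u i \<and> long_run E n u j \<and> dC n i j = k"
  proof (intro exI conjI)
    show "i < n" "forward_run E n u i" using i by (auto simp: Fw_def)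
    show "(i+k) mod n < n" using n by simp
    show "long_run E n u ((i+k) mod n)" using i n by (auto simp: S_def Fw_def B_def badset_def)
    show "dC n i ((i+k) mod n) = k" using dC_shift[OF kn, of i] i by (simp add: Fw_def)
  qed
next
  define B where "B = badset E n u"
  have fB: "finite B" by (simp add: B_def badset_def)
  define m where "m = n div 4"
  have mn: "m < n" using n by (simp add: m_def)
  define S where "S = (\<Union>a\<in>{..<4}. {i\<in>{..<n}. (i + a * m) mod n \<in> B})"
  have "card S \<le> (\<Sum>a<4. card {i\<in>{..<n}. (i + a * m) mod n \<in> B})" unfolding S_def by (rule card_UN_le) simp
  also have "\<dots> \<le> (\<Sum>a<(4::nat). card B)" by (intro sum_mono card_shift fB)
  finally have "card S < n" using bad by (simp add: B_def)
  then have "\<not> {..<n} \<subseteq> S" using card_mono[of S "{..<n}"] by (auto simp: S_def)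
  then obtain i where i: "i < n" "i \<notin> S" by blast
  define p where "p t = (i + (t - 1) * m) mod n" for t
  show "\<exists>p::nat \<Rightarrow> nat. (\<forall>t\<in>{1,2,3,4}. p t < n \<and> long_run E n u (p t)) \<and>
                  (\<forall>t\<in>{1,2,3}. dC n (p t) (p (t+1)) = n div 4)"
  proof (intro exI conjI ballI)
    fix t :: nat assume t: "t \<in> {1,2,3,4}"
    show "p t < n" using n by (simp add: p_def)
    have "t - 1 < 4" using t by auto
    then have "p t \<notin> B" using i by (auto simp: S_def p_def)
    then show "long_run E n u (p t)" using n by (auto simp: B_def badset_def p_def)
  next
    fix t :: nat assume t: "t \<in> {1,2,3}"
    obtain s where ts: "t = Suc s" using t by auto
    have "p (t+1) = (i + (t - 1) * m + m) mod n" using ts by (simp add: p_def algebra_simps)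
    then show "dC n (p t) (p (t+1)) = n div 4" using dC_shift[OF mn, of "i + (t - 1) * m"]
      by (simp add: p_def m_def)
  qed
qed

lemma rev_facts:
  assumes n: "n > 0" and t: "t < n"
  shows "u ((n - t) mod n) = u (Suc (n - 1 - t) mod n)"
    and "u ((n - Suc t mod n) mod n) = u (n - 1 - t)"
proof -
  show "u ((n - t) mod n) = u (Suc (n - 1 - t) mod n)" using t by (simp add: Suc_diff_Suc)
  show "u ((n - Suc t mod n) mod n) = u (n - 1 - t)"
  proof (cases "Suc t < n")
    case True then show ?thesis by simp
  next
    case False then have "Suc t = n" using t by simp
    then show ?thesis by simp
  qed
qed

lemma reversal:
  assumes cl: "cycle_labelling V E n u" and n: "n>0"
  defines "u' \<equiv> (\<lambda>i. u ((n - i) mod n))"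
  shows "cycle_labelling V E n u'"
    and "card {t\<in>{..<n}. fwd_edge E n u' t} = card {t\<in>{..<n}. \<not> fwd_edge E n u t}"
proof -
  have k1: "u' t = u (Suc (n - 1 - t) mod n)" if "t < n" for t
    using rev_facts(1)[OF n that] by (simp add: u'_def)
  have k2: "u' (Suc t mod n) = u (n - 1 - t)" if "t < n" for t
    using rev_facts(2)[OF n that] by (simp add: u'_def)
  have bij: "bij_betw u {..<n} V" and xo: "\<forall>i<n. ((u i, u (Suc i mod n)) \<in> E) \<noteq> ((u (Suc i mod n), u i) \<in> E)"
    and Es: "E \<subseteq> {(u i, u (Suc i mod n)) | i. i < n} \<union> {(u (Suc i mod n), u i) | i. i < n}"
    using cl unfolding cycle_labelling_def by blast+
  have rb: "bij_betw (\<lambda>i. (n - i) mod n) {..<n} {..<n}"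
  proof (rule bij_betw_byWitness[where f'="\<lambda>i. (n - i) mod n"])
    show "\<forall>a\<in>{..<n}. (n - (n - a) mod n) mod n = a"
    proof
      fix a assume a: "a \<in> {..<n}"
      show "(n - (n - a) mod n) mod n = a"
      proof (cases "a = 0")
        case True then show ?thesis by simp
      next
        case False then show ?thesis using a by simp
      qed
    qed
    then show "\<forall>a\<in>{..<n}. (n - (n - a) mod n) mod n = a" .
  qed (use n in auto)
  show "cycle_labelling V E n u'"
    unfolding cycle_labelling_def
  proof (intro conjI allI impI)
    have "bij_betw (u \<circ> (\<lambda>i. (n - i) mod n)) {..<n} V" by (rule bij_betw_trans[OF rb bij])
    then show "bij_betw u' {..<n} V" by (simp add: u'_def comp_def)
  next
    fix i assume i: "i < n"
    have "n - 1 - i < n" using i by simp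
    then show "((u' i, u' (Suc i mod n)) \<in> E) \<noteq> ((u' (Suc i mod n), u' i) \<in> E)"
      using xo k1[OF i] k2[OF i] by metis
  next
    show "E \<subseteq> {(u' i, u' (Suc i mod n)) | i. i < n} \<union> {(u' (Suc i mod n), u' i) | i. i < n}"
    proof
      fix e assume "e \<in> E"
      then obtain i where i: "i < n" "e = (u i, u (Suc i mod n)) \<or> e = (u (Suc i mod n), u i)" using Es by blast
      define t where "t = n - 1 - i"
      have t: "t < n" "n - 1 - t = i" using i n by (auto simp: t_def)
      have "u' t = u (Suc i mod n)" "u' (Suc t mod n) = u i" using k1[OF t(1)] k2[OF t(1)] t(2) by simp_all
      then have "e = (u' (Suc t mod n), u' t) \<or> e = (u' t, u' (Suc t mod n))" using i(2) by auto
      moreover have "(u' (Suc t mod n), u' t) \<in> {(u' (Suc i mod n), u' i) | i. i < n}" using t(1) by blast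
      moreover have "(u' t, u' (Suc t mod n)) \<in> {(u' i, u' (Suc i mod n)) | i. i < n}" using t(1) by blast
      ultimately show "e \<in> {(u' i, u' (Suc i mod n)) | i. i < n} \<union> {(u' (Suc i mod n), u' i) | i. i < n}"
        by blast
    qed
  qed
  have fe: "fwd_edge E n u' t \<longleftrightarrow> \<not> fwd_edge E n u (n - 1 - t)" if t: "t < n" for t
  proof -
    have s: "n - 1 - t < n" using t by simp
    have "fwd_edge E n u' t \<longleftrightarrow> (u (Suc (n - 1 - t) mod n), u (n - 1 - t)) \<in> E"
      unfolding fwd_edge_def using t k1[OF t] k2[OF t] by simp
    also have "\<dots> \<longleftrightarrow> bwd_edge E n u (n - 1 - t)" using s by (simp add: bwd_edge_def)
    finally show ?thesis using xor[OF cl n] by simp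
  qed
  have "{t\<in>{..<n}. fwd_edge E n u' t} = (\<lambda>s. n - 1 - s) ` {t\<in>{..<n}. \<not> fwd_edge E n u t}"
  proof (intro equalityI subsetI)
    fix t assume "t \<in> {t\<in>{..<n}. fwd_edge E n u' t}"
    then have t: "t \<in> {..<n}" "fwd_edge E n u' t" by auto
    then have "n - 1 - t \<in> {t\<in>{..<n}. \<not> fwd_edge E n u t}" using fe n by auto
    moreover have "t = n - 1 - (n - 1 - t)" using t by simp
    ultimately show "t \<in> (\<lambda>s. n - 1 - s) ` {t\<in>{..<n}. \<not> fwd_edge E n u t}" by blast
  next
    fix x assume "x \<in> (\<lambda>s. n - 1 - s) ` {t\<in>{..<n}. \<not> fwd_edge E n u t}"
    then obtain s where s: "s \<in> {..<n}" "\<not> fwd_edge E n u s" and xs: "x = n - 1 - s" by auto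
    have a: "n - 1 - s < n" using n by simp
    have "n - 1 - (n - 1 - s) = s" using s by simp
    then have "fwd_edge E n u' (n - 1 - s)" using fe[of "n - 1 - s"] s n by simp
    then show "x \<in> {t\<in>{..<n}. fwd_edge E n u' t}" using a xs by simp
  qed
  moreover have "inj_on (\<lambda>s. n - 1 - s) {t\<in>{..<n}. \<not> fwd_edge E n u t}"
    by (rule inj_onI) auto
  ultimately show "card {t\<in>{..<n}. fwd_edge E n u' t} = card {t\<in>{..<n}. \<not> fwd_edge E n u t}"
    by (simp add: card_image)
qed
theorem proposition5p5:
  "\<exists>\<epsilon>0::real. \<epsilon>0 > 0 \<and> (\<forall>\<epsilon>::real. 0 < \<epsilon> \<and> \<epsilon> \<le> \<epsilon>0 \<longrightarrow>
     (\<exists>n0::nat. \<forall>n \<ge> n0. \<forall>(k::nat) (V::nat set) (E::(nat \<times> nat) set).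
        4 * k \<ge> n \<and> 4 * k \<le> 3 * n \<and> oriented_cycle V E n \<and> real (sinks V E) < \<epsilon> * real n
        \<longrightarrow> (\<exists>u. cycle_labelling V E n u \<and>
              (\<exists>i j. i < n \<and> j < n \<and> forward_run E n u i \<and> long_run E n u j \<and> dC n i j = k) \<and>
              (\<exists>p::nat \<Rightarrow> nat. (\<forall>t\<in>{1,2,3,4}. p t < n \<and> long_run E n u (p t)) \<and>
                  (\<forall>t\<in>{1,2,3}. dC n (p t) (p (t+1)) = n div 4)))))"
proof (intro exI[of _ "1/400"] conjI allI impI)
  fix \<epsilon> :: real assume e: "0 < \<epsilon> \<and> \<epsilon> \<le> 1/400"
  show "\<exists>n0::nat. \<forall>n \<ge> n0. \<forall>(k::nat) (V::nat set) (E::(nat \<times> nat) set).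
        4 * k \<ge> n \<and> 4 * k \<le> 3 * n \<and> oriented_cycle V E n \<and> real (sinks V E) < \<epsilon> * real n
        \<longrightarrow> (\<exists>u. cycle_labelling V E n u \<and>
              (\<exists>i j. i < n \<and> j < n \<and> forward_run E n u i \<and> long_run E n u j \<and> dC n i j = k) \<and>
              (\<exists>p::nat \<Rightarrow> nat. (\<forall>t\<in>{1,2,3,4}. p t < n \<and> long_run E n u (p t)) \<and>
                  (\<forall>t\<in>{1,2,3}. dC n (p t) (p (t+1)) = n div 4)))"
  proof (intro exI[of _ 0] allI impI)
    fix n k :: nat and V :: "nat set" and E :: "(nat \<times> nat) set"
    assume h: "4 * k \<ge> n \<and> 4 * k \<le> 3 * n \<and> oriented_cycle V E n \<and> real (sinks V E) < \<epsilon> * real n"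
    then obtain u where cl: "cycle_labelling V E n u" and n3: "n \<ge> 3" by (auto simp: oriented_cycle_def)
    have n: "n > 0" using n3 by simp
    have "\<epsilon> * real n \<le> (1/400) * real n" using e by (intro mult_right_mono) auto
    then have "real (sinks V E) < real n / 400" using h by simp
    then have s: "400 * sinks V E < n" by linarith
    have badb: "10 * card (badset E n w) < n" if "cycle_labelling V E n w" for w
      using bad_bound[OF that n] s by linarith
    show "\<exists>u. cycle_labelling V E n u \<and>
              (\<exists>i j. i < n \<and> j < n \<and> forward_run E n u i \<and> long_run E n u j \<and> dC n i j = k) \<and>
              (\<exists>p::nat \<Rightarrow> nat. (\<forall>t\<in>{1,2,3,4}. p t < n \<and> long_run E n u (p t)) \<and>
                  (\<forall>t\<in>{1,2,3}. dC n (p t) (p (t+1)) = n div 4))"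
    proof (cases "2 * card {t\<in>{..<n}. fwd_edge E n u t} \<ge> n")
      case True
      then show ?thesis using core[OF cl n badb[OF cl] True] h cl by blast
    next
      case False
      define u' where "u' = (\<lambda>i. u ((n - i) mod n))"
      have cl': "cycle_labelling V E n u'" using reversal(1)[OF cl n] by (simp add: u'_def)
      have c': "card {t\<in>{..<n}. fwd_edge E n u' t} = card {t\<in>{..<n}. \<not> fwd_edge E n u t}"
        using reversal(2)[OF cl n] by (simp add: u'_def)
      have "card {t\<in>{..<n}. \<not> fwd_edge E n u t} + card {t\<in>{..<n}. fwd_edge E n u t} = n"
      proof -
        have "card {t\<in>{..<n}. \<not> fwd_edge E n u t} + card {t\<in>{..<n}. fwd_edge E n u t}
           = card ({t\<in>{..<n}. \<not> fwd_edge E n u t} \<union> {t\<in>{..<n}. fwd_edge E n u t})"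
          by (rule card_Un_disjoint[symmetric]) auto
        also have "{t\<in>{..<n}. \<not> fwd_edge E n u t} \<union> {t\<in>{..<n}. fwd_edge E n u t} = {..<n}" by auto
        finally show ?thesis by simp
      qed
      then have half: "2 * card {t\<in>{..<n}. fwd_edge E n u' t} \<ge> n" using False c' by linarith
      show ?thesis using core[OF cl' n badb[OF cl'] half] h cl' by blast
    qed
  qed
qed simp
end
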